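(* Let $p$ be a prime. The group $X_{\{p\}}$ is a uniserial $\langle s\rangle$-module: for every integer $j\ge 0$ it has a unique $\langle s\rangle$-submodule of order $p^j$, namely $X_{p^j}=X\cap\ker\gamma^j$ (with $X_{1}=1$), and for $j\ge1$ this submodule is generated as an $\langle s\rangle$-module by $x_{p^j}$.
   Context: $s$ is the permutation matrix of the $p$-cycle $(1,2,\ldots,p)$ (permutations $\alpha$ correspond to matrices $[\delta_{i\alpha,j}]_{i,j}$), acting on the diagonal group $\mathrm{D}(p,\mathbb{C})$ by conjugation, $d^s=s^{-1}ds$; the action is extended to the integral group ring written exponentially and multiplicatively, e.g. $d^{1-s}=d\,(d^s)^{-1}$. $X=\mathrm{SL}(p,\mathbb{C})\cap\mathrm{D}(p,\mathbb{C})$, and $X_{\{p\}}$ is the subgroup of elements of $X$ of $p$-power order. $\gamma$ is the endomorphism $\gamma(d)=d^{1-s}$ of $\mathrm{D}(p,\mathbb{C})$. For $m\ge1$ let $b_m=\mathrm{diag}(e^{2\pi i/m},e^{-2\pi i/m},1,\ldots,1)$. For a positive integer $j$ write $j=n(p-1)-m$ with $n,m$ non-negative integers and $m<p-1$, and set $x_{p^j}=\gamma^m(b_{p^n})$. *)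

theory Defs
  imports "HOL-Analysis.Analysis"
begin

text \<open>Diagonal matrices diag(d_0,...,d_(p-1)) in D(p,C) are encoded as functions
  nat => complex with d i nonzero for i < p and d i = 1 for i >= p
  (indices shifted from 1..p to 0..p-1).\<close>

definition Dg :: "nat \<Rightarrow> (nat \<Rightarrow> complex) set" where
  "Dg p = {d. (\<forall>i<p. d i \<noteq> 0) \<and> (\<forall>i\<ge>p. d i = 1)}"

definition dmul :: "(nat \<Rightarrow> complex) \<Rightarrow> (nat \<Rightarrow> complex) \<Rightarrow> (nat \<Rightarrow> complex)" where
  "dmul d e = (\<lambda>i. d i * e i)"

definition dinv :: "(nat \<Rightarrow> complex) \<Rightarrow> (nat \<Rightarrow> complex)" where
  "dinv d = (\<lambda>i. inverse (d i))"

definition done1 :: "nat \<Rightarrow> complex" where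
  "done1 = (\<lambda>i. 1)"

definition dpow :: "(nat \<Rightarrow> complex) \<Rightarrow> nat \<Rightarrow> (nat \<Rightarrow> complex)" where
  "dpow d k = (\<lambda>i. d i ^ k)"

text \<open>Conjugation by the permutation matrix s of the p-cycle (1,2,...,p):
  (s^-1 d s) has i-th diagonal entry d_(i-1) (indices mod p).\<close>
definition sact :: "nat \<Rightarrow> (nat \<Rightarrow> complex) \<Rightarrow> (nat \<Rightarrow> complex)" where
  "sact p d = (\<lambda>i. if i < p then d ((i + p - 1) mod p) else 1)"

text \<open>gamma(d) = d^(1-s) = d (d^s)^-1\<close>
definition gam :: "nat \<Rightarrow> (nat \<Rightarrow> complex) \<Rightarrow> (nat \<Rightarrow> complex)" where
  "gam p d = dmul d (dinv (sact p d))"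

definition Xg :: "nat \<Rightarrow> (nat \<Rightarrow> complex) set" where
  "Xg p = {d \<in> Dg p. (\<Prod>i<p. d i) = 1}"

definition Xpp :: "nat \<Rightarrow> (nat \<Rightarrow> complex) set" where
  "Xpp p = {d \<in> Xg p. \<exists>k. dpow d (p ^ k) = done1}"

definition Xker :: "nat \<Rightarrow> nat \<Rightarrow> (nat \<Rightarrow> complex) set" where
  "Xker p j = {d \<in> Xg p. (gam p ^^ j) d = done1}"

definition is_submod :: "nat \<Rightarrow> (nat \<Rightarrow> complex) set \<Rightarrow> bool" where
  "is_submod p H \<longleftrightarrow> H \<subseteq> Xpp p \<and> done1 \<in> H \<and>
     (\<forall>x\<in>H. \<forall>y\<in>H. dmul x y \<in> H) \<and> (\<forall>x\<in>H. dinv x \<in> H) \<and>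
     (\<forall>x\<in>H. sact p x \<in> H)"

definition gen_submod :: "nat \<Rightarrow> (nat \<Rightarrow> complex) \<Rightarrow> (nat \<Rightarrow> complex) set" where
  "gen_submod p x = \<Inter> {H. is_submod p H \<and> x \<in> H}"

definition bm :: "nat \<Rightarrow> nat \<Rightarrow> (nat \<Rightarrow> complex)" where
  "bm p m = (\<lambda>i. if i = 0 then exp (2 * pi * \<i> / of_nat m)
               else if i = 1 then exp (- 2 * pi * \<i> / of_nat m)
               else 1)"

text \<open>x_(p^j) = gamma^m(b_(p^n)) where j = n(p-1) - m, 0 <= m < p-1\<close>
definition xgen :: "nat \<Rightarrow> nat \<Rightarrow> (nat \<Rightarrow> complex)" where
  "xgen p j = (let n = (j + p - 2) div (p - 1); m = n * (p - 1) - j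
               in (gam p ^^ m) (bm p (p ^ n)))"

end

theory Submission
  imports Defs
begin

lemma Dg_nz: "d \<in> Dg p \<Longrightarrow> i < p \<Longrightarrow> d i \<noteq> 0"
  by (simp add: Dg_def)
lemma Dg_one: "d \<in> Dg p \<Longrightarrow> p \<le> i \<Longrightarrow> d i = 1"
  by (simp add: Dg_def)
lemma Dg_nz_all: "d \<in> Dg p \<Longrightarrow> d i \<noteq> 0"
  by (cases "i < p") (auto simp: Dg_def)

lemma dmul_done1[simp]: "dmul x done1 = x" "dmul done1 x = x"
  by (auto simp: dmul_def done1_def)

lemma gam_dmul: "gam p (dmul x y) = dmul (gam p x) (gam p y)"
  by (auto simp: gam_def dmul_def dinv_def sact_def)
lemma gam_dinv: "gam p (dinv x) = dinv (gam p x)"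
  by (auto simp: gam_def dmul_def dinv_def sact_def)
lemma gam_done1[simp]: "gam p done1 = done1"
  by (auto simp: gam_def dmul_def dinv_def sact_def done1_def)
lemma gam_sact: "gam p (sact p x) = sact p (gam p x)"
  by (auto simp: gam_def dmul_def dinv_def sact_def)
lemma gam_dpow: "gam p (dpow x n) = dpow (gam p x) n"
  by (auto simp: gam_def dmul_def dinv_def sact_def dpow_def power_mult_distrib power_inverse)
lemma sact_dmul: "sact p (dmul x y) = dmul (sact p x) (sact p y)"
  by (auto simp: dmul_def sact_def)
lemma sact_dinv: "sact p (dinv x) = dinv (sact p x)"
  by (auto simp: dinv_def sact_def)
lemma sact_done1[simp]: "sact p done1 = done1"
  by (auto simp: sact_def done1_def)
lemma sact_dpow: "sact p (dpow x n) = dpow (sact p x) n"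
  by (auto simp: dpow_def sact_def)

lemma gamk_dmul: "(gam p ^^ k) (dmul x y) = dmul ((gam p ^^ k) x) ((gam p ^^ k) y)"
  by (induction k) (auto simp: gam_dmul)
lemma gamk_dinv: "(gam p ^^ k) (dinv x) = dinv ((gam p ^^ k) x)"
  by (induction k) (auto simp: gam_dinv)
lemma gamk_done1[simp]: "(gam p ^^ k) done1 = done1"
  by (induction k) auto
lemma gamk_sact: "(gam p ^^ k) (sact p x) = sact p ((gam p ^^ k) x)"
  by (induction k) (auto simp: gam_sact)
lemma gamk_dpow: "(gam p ^^ k) (dpow x n) = dpow ((gam p ^^ k) x) n"
  by (induction k) (auto simp: gam_dpow)

lemma Dg_dmul: "x \<in> Dg p \<Longrightarrow> y \<in> Dg p \<Longrightarrow> dmul x y \<in> Dg p"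
  by (auto simp: Dg_def dmul_def)
lemma Dg_dinv: "x \<in> Dg p \<Longrightarrow> dinv x \<in> Dg p"
  by (auto simp: Dg_def dinv_def)
lemma Dg_dpow: "x \<in> Dg p \<Longrightarrow> dpow x n \<in> Dg p"
  by (auto simp: Dg_def dpow_def)
lemma Dg_sact: "x \<in> Dg p \<Longrightarrow> sact p x \<in> Dg p"
  by (auto simp: Dg_def sact_def)
lemma Dg_done1: "done1 \<in> Dg p"
  by (auto simp: Dg_def done1_def)

lemma prod_sact: "0 < p \<Longrightarrow> (\<Prod>i<p. sact p x i) = (\<Prod>i<p. x i)"
proof -
  assume "0 < p"
  then obtain q where q: "p = Suc q" by (cases p) auto
  have "(\<Prod>i<p. sact p x i) = sact p x 0 * (\<Prod>i<q. sact p x (Suc i))"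
    unfolding q by (rule prod.lessThan_Suc_shift)
  also have "sact p x 0 = x q" by (simp add: sact_def q)
  also have "(\<Prod>i<q. sact p x (Suc i)) = (\<Prod>i<q. x i)"
  proof (rule prod.cong)
    fix i assume "i \<in> {..<q}"
    then have "Suc (i + q) mod Suc q = i"
      by (metis add_Suc_right lessThan_iff less_SucI mod_add_self2 mod_less)
    then show "sact p x (Suc i) = x i" using \<open>i \<in> {..<q}\<close> by (simp add: sact_def q)
  qed simp
  finally show ?thesis by (simp add: q mult.commute)
qed

lemma Xg_Dg: "x \<in> Xg p \<Longrightarrow> x \<in> Dg p" by (simp add: Xg_def)
lemma Xg_dmul: "x \<in> Xg p \<Longrightarrow> y \<in> Xg p \<Longrightarrow> dmul x y \<in> Xg p"
  by (auto simp: Xg_def Dg_dmul) (simp add: dmul_def prod.distrib)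
lemma Xg_dinv: "x \<in> Xg p \<Longrightarrow> dinv x \<in> Xg p"
  by (auto simp: Xg_def Dg_dinv) (simp add: dinv_def prod_inversef[of x, unfolded comp_def])
lemma Xg_dpow: "x \<in> Xg p \<Longrightarrow> dpow x n \<in> Xg p"
  by (auto simp: Xg_def Dg_dpow) (simp add: dpow_def prod_power_distrib[symmetric])
lemma Xg_sact: "0 < p \<Longrightarrow> x \<in> Xg p \<Longrightarrow> sact p x \<in> Xg p"
  by (auto simp: Xg_def Dg_sact prod_sact)
lemma Xg_done1: "done1 \<in> Xg p"
  by (auto simp: Xg_def Dg_done1) (simp add: done1_def)
lemma Xg_gam: "0 < p \<Longrightarrow> x \<in> Xg p \<Longrightarrow> gam p x \<in> Xg p"
  unfolding gam_def by (intro Xg_dmul Xg_dinv Xg_sact)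
lemma Xg_gamk: "0 < p \<Longrightarrow> x \<in> Xg p \<Longrightarrow> (gam p ^^ k) x \<in> Xg p"
  by (induction k) (auto simp: Xg_gam)

lemma sact_pow: "0 < p \<Longrightarrow> x \<in> Dg p \<Longrightarrow>
   (sact p ^^ k) x = (\<lambda>i. if i < p then x ((i + k * (p - 1)) mod p) else 1)"
proof (induction k)
  case 0
  then show ?case by (auto simp: Dg_def)
next
  case (Suc k)
  show ?case
  proof
    fix i
    show "(sact p ^^ Suc k) x i = (if i < p then x ((i + Suc k * (p - 1)) mod p) else 1)"
    proof (cases "i < p")
      case True
      have "(sact p ^^ Suc k) x i = (sact p ^^ k) x ((i + p - 1) mod p)"
        using True by (simp add: sact_def)
      also have "\<dots> = x (((i + p - 1) mod p + k * (p - 1)) mod p)"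
        using Suc by simp
      also have "((i + p - 1) mod p + k * (p - 1)) mod p = (i + Suc k * (p - 1)) mod p"
      proof -
        have "((i + p - 1) mod p + k * (p - 1)) mod p = (i + p - 1 + k * (p - 1)) mod p"
          by (rule mod_add_left_eq)
        moreover have "i + p - 1 + k * (p - 1) = i + Suc k * (p - 1)" using Suc.prems by simp
        ultimately show ?thesis by (simp add: add.assoc)
      qed
      finally show ?thesis using True by simp
    qed (simp add: sact_def)
  qed
qed

lemma sact_pow_p: "0 < p \<Longrightarrow> x \<in> Dg p \<Longrightarrow> (sact p ^^ p) x = x"
proof
  fix i assume p: "0 < p" and x: "x \<in> Dg p"
  have "(i + p * (p - 1)) mod p = i mod p" by simp
  then show "(sact p ^^ p) x i = x i"
    using p x by (auto simp: sact_pow Dg_def)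
qed

definition scal :: "nat \<Rightarrow> complex \<Rightarrow> nat \<Rightarrow> complex" where
  "scal p w = (\<lambda>i. if i < p then w else 1)"

lemma gam_one_iff: "x \<in> Dg p \<Longrightarrow> gam p x = done1 \<longleftrightarrow> sact p x = x"
proof
  assume x: "x \<in> Dg p" and g: "gam p x = done1"
  show "sact p x = x"
  proof
    fix i
    have "x i * inverse (sact p x i) = 1" using g by (auto simp: gam_def dmul_def dinv_def done1_def fun_eq_iff)
    then show "sact p x i = x i"
      by (metis inverse_unique inverse_inverse_eq)
  qed
next
  assume x: "x \<in> Dg p" and s: "sact p x = x"
  show "gam p x = done1"
    using Dg_nz_all[OF x] by (auto simp: gam_def dmul_def dinv_def done1_def s)
qed

lemma Xker1_char: "0 < p \<Longrightarrow> Xker p 1 = scal p ` {w. w ^ p = 1}"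
proof
  assume p: "0 < p"
  show "Xker p 1 \<subseteq> scal p ` {w. w ^ p = 1}"
  proof
    fix x assume "x \<in> Xker p 1"
    then have x: "x \<in> Xg p" and g: "gam p x = done1" by (auto simp: Xker_def)
    have s: "sact p x = x" using g x gam_one_iff Xg_Dg by blast
    have c: "i < p \<Longrightarrow> x i = x 0" for i
    proof (induction i)
      case (Suc i)
      have "x (Suc i) = sact p x (Suc i)" using s by simp
      also have "\<dots> = x i" using Suc.prems by (simp add: sact_def)
      finally show ?case using Suc by simp
    qed simp
    have "x = scal p (x 0)"
    proof
      fix i show "x i = scal p (x 0) i"
        using x c[of i] by (cases "i < p") (auto simp: scal_def Xg_def Dg_def)
    qed
    moreover have "x 0 ^ p = 1"
    proof -
      have "(\<Prod>i<p. x i) = 1" using x by (simp add: Xg_def)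
      also have "(\<Prod>i<p. x i) = (\<Prod>i<p. x 0)" by (rule prod.cong) (use c in blast)+
      finally show ?thesis by simp
    qed
    ultimately show "x \<in> scal p ` {w. w ^ p = 1}" by blast
  qed
next
  assume p: "0 < p"
  show "scal p ` {w. w ^ p = 1} \<subseteq> Xker p 1"
  proof
    fix x assume "x \<in> scal p ` {w. w ^ p = 1}"
    then obtain w where w: "w ^ p = 1" and xw: "x = scal p w" by auto
    have w0: "w \<noteq> 0" using w p by (metis power_0_left not_gr0 zero_neq_one)
    have xD: "x \<in> Dg p" using w0 by (auto simp: Dg_def xw scal_def)
    have "x \<in> Xg p" using xD w by (simp add: Xg_def xw scal_def)
    moreover have "sact p x = x" using p by (auto simp: sact_def xw scal_def)
    ultimately show "x \<in> Xker p 1" using gam_one_iff xD by (simp add: Xker_def)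
  qed
qed

lemma card_Xker1: "0 < p \<Longrightarrow> finite (Xker p 1) \<and> card (Xker p 1) = p"
proof -
  assume p: "0 < p"
  have inj: "inj_on (scal p) {w. w ^ p = 1}"
    using p by (auto simp: inj_on_def scal_def fun_eq_iff)
  have fin: "finite {w::complex. w ^ p = 1}" using p by (simp add: finite_roots_unity)
  have "card (scal p ` {w. w ^ p = 1}) = p"
    using p inj by (simp add: card_image card_complex_roots_unity)
  then show ?thesis
    using fin Xker1_char[OF p] by simp
qed

lemma complex_nth_root: "0 < n \<Longrightarrow> w \<noteq> 0 \<Longrightarrow> \<exists>c::complex. c \<noteq> 0 \<and> c ^ n = w"
proof -
  assume n: "0 < n" and w: "w \<noteq> 0"
  define c where "c = exp (Ln w / of_nat n)"
  have "c ^ n = exp (of_nat n * (Ln w / of_nat n))" unfolding c_def by (rule exp_of_nat_mult[symmetric])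
  also have "\<dots> = w" using n w by simp
  finally have "c ^ n = w" .
  moreover have "c \<noteq> 0" by (simp add: c_def)
  ultimately show ?thesis by blast
qed

lemma gam_surj: "0 < p \<Longrightarrow> y \<in> Xg p \<Longrightarrow> \<exists>x\<in>Xg p. gam p x = y"
proof -
  assume p: "0 < p" and y: "y \<in> Xg p"
  then obtain q where q: "p = Suc q" by (cases p) auto
  have yD: "y \<in> Dg p" using y by (simp add: Xg_def)
  define P where "P i = (\<Prod>t<i. y (Suc t))" for i
  have P0: "P i \<noteq> 0" for i unfolding P_def using Dg_nz_all[OF yD] by simp
  have PS: "P (Suc k) = P k * y (Suc k)" for k unfolding P_def by simp
  define Q where "Q = (\<Prod>i<p. P i)"
  have Q0: "Q \<noteq> 0" unfolding Q_def using P0 by simp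
  obtain c where c0: "c \<noteq> 0" and cp: "c ^ p = inverse Q"
    using complex_nth_root[OF p, of "inverse Q"] Q0 by auto
  define x where "x = (\<lambda>i. if i < p then c * P i else 1)"
  have xD: "x \<in> Dg p" using c0 P0 by (auto simp: Dg_def x_def)
  have "(\<Prod>i<p. x i) = (\<Prod>i<p. c * P i)" by (rule prod.cong) (auto simp: x_def)
  also have "\<dots> = c ^ p * Q" by (simp add: prod.distrib Q_def)
  also have "\<dots> = 1" using cp Q0 by simp
  finally have xX: "x \<in> Xg p" using xD by (simp add: Xg_def)
  have y0: "y 0 * P q = 1"
  proof -
    have "(\<Prod>i<p. y i) = y 0 * (\<Prod>i<q. y (Suc i))" unfolding q by (rule prod.lessThan_Suc_shift)
    then show ?thesis using y by (simp add: Xg_def P_def)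
  qed
  have "gam p x = y"
  proof
    fix i
    show "gam p x i = y i"
    proof (cases "i < p")
      case False
      then show ?thesis using yD by (simp add: gam_def dmul_def dinv_def sact_def x_def Dg_def)
    next
      case True
      show ?thesis
      proof (cases i)
        case 0
        have "gam p x i = c * inverse (c * P q)"
          using True 0 by (simp add: gam_def dmul_def dinv_def sact_def x_def q P_def)
        also have "\<dots> = inverse (P q)" using c0 by (simp add: field_simps)
        also have "\<dots> = y 0" using y0 P0 by (simp add: field_simps)
        finally show ?thesis using 0 by simp
      next
        case (Suc k)
        have m: "(i + p - 1) mod p = k" using True Suc by simp
        have "gam p x i = c * P (Suc k) * inverse (c * P k)"
          using True Suc m by (simp add: gam_def dmul_def dinv_def sact_def x_def)
        also have "\<dots> = y (Suc k)" using c0 P0[of k] by (simp add: PS field_simps)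
        finally show ?thesis using Suc by simp
      qed
    qed
  qed
  then show ?thesis using xX by blast
qed

lemma Xker_0: "Xker p 0 = {done1}"
  by (auto simp: Xker_def Xg_done1)

lemma Xker_1: "Xker p (Suc 0) = {x \<in> Xg p. gam p x = done1}"
  by (simp add: Xker_def)

lemma Xker_Suc: "0 < p \<Longrightarrow> Xker p (Suc k) = {x \<in> Xg p. gam p x \<in> Xker p k}"
  by (auto simp: Xker_def funpow_Suc_right Xg_gam simp del: funpow.simps)

lemma gam_image_Xker: "0 < p \<Longrightarrow> gam p ` Xker p (Suc k) = Xker p k"
proof
  assume p: "0 < p"
  show "gam p ` Xker p (Suc k) \<subseteq> Xker p k" using Xker_Suc[OF p] by auto
  show "Xker p k \<subseteq> gam p ` Xker p (Suc k)"
  proof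
    fix y assume y: "y \<in> Xker p k"
    then have "y \<in> Xg p" by (simp add: Xker_def)
    then obtain x where "x \<in> Xg p" "gam p x = y" using gam_surj p by blast
    then show "y \<in> gam p ` Xker p (Suc k)" using y Xker_Suc[OF p] by auto
  qed
qed

lemma dmul_inj: "x0 \<in> Dg p \<Longrightarrow> inj_on (dmul x0) A"
  by (auto simp: inj_on_def dmul_def fun_eq_iff dest: Dg_nz_all)

lemma fiber:
  assumes p: "0 < p" and S: "S \<subseteq> Xg p"
    and cl: "\<And>x c. x \<in> S \<Longrightarrow> c \<in> Xker p 1 \<Longrightarrow> dmul x c \<in> S"
    and fin: "finite (gam p ` S)"
  shows "finite S \<and> card S = p * card (gam p ` S)"
proof -
  have F: "{x \<in> S. gam p x = gam p x0} = dmul x0 ` Xker p 1" if x0: "x0 \<in> S" for x0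
  proof
    have x0X: "x0 \<in> Xg p" using x0 S by auto
    show "{x \<in> S. gam p x = gam p x0} \<subseteq> dmul x0 ` Xker p 1"
    proof
      fix x assume "x \<in> {x \<in> S. gam p x = gam p x0}"
      then have x: "x \<in> S" and g: "gam p x = gam p x0" by auto
      define c where "c = dmul (dinv x0) x"
      have cX: "c \<in> Xg p" using x x0X S by (auto simp: c_def intro: Xg_dmul Xg_dinv)
      have gx0: "gam p x0 \<in> Dg p" using Xg_gam[OF p x0X] by (simp add: Xg_def)
      have "gam p c = done1"
        unfolding c_def gam_dmul gam_dinv g
        using Dg_nz_all[OF gx0] by (auto simp: dmul_def dinv_def done1_def)
      then have "c \<in> Xker p 1" using cX by (simp add: Xker_1)
      moreover have "x = dmul x0 c"
        using Dg_nz_all[OF Xg_Dg[OF x0X]] by (auto simp: c_def dmul_def dinv_def)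
      ultimately show "x \<in> dmul x0 ` Xker p 1" by blast
    qed
    show "dmul x0 ` Xker p 1 \<subseteq> {x \<in> S. gam p x = gam p x0}"
      using cl[OF x0] by (auto simp: Xker_1 gam_dmul)
  qed
  have cF: "finite {x \<in> S. gam p x = y} \<and> card {x \<in> S. gam p x = y} = p" if y: "y \<in> gam p ` S" for y
  proof -
    obtain x0 where x0: "x0 \<in> S" and yx: "y = gam p x0" using y by auto
    have "inj_on (dmul x0) (Xker p 1)" using x0 S by (auto intro: dmul_inj Xg_Dg)
    then show ?thesis using F[OF x0] card_Xker1[OF p] yx by (simp add: card_image)
  qed
  have U: "S = (\<Union>y\<in>gam p ` S. {x \<in> S. gam p x = y})" by auto
  have "finite (\<Union>y\<in>gam p ` S. {x \<in> S. gam p x = y})"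
    by (rule finite_UN_I) (use fin cF in auto)
  then have "finite S" using U by simp
  moreover have "card S = (\<Sum>y\<in>gam p ` S. card {x \<in> S. gam p x = y})"
    by (subst U, rule card_UN_disjoint) (use fin cF in auto)
  moreover have "\<dots> = (\<Sum>y\<in>gam p ` S. p)" by (rule sum.cong) (use cF in auto)
  ultimately show ?thesis by simp
qed

lemma card_Xker: "0 < p \<Longrightarrow> finite (Xker p k) \<and> card (Xker p k) = p ^ k"
proof (induction k)
  case 0
  then show ?case by (simp add: Xker_0)
next
  case (Suc k)
  have "finite (Xker p (Suc k)) \<and> card (Xker p (Suc k)) = p * card (gam p ` Xker p (Suc k))"
  proof (rule fiber[OF Suc.prems])
    show "Xker p (Suc k) \<subseteq> Xg p" by (auto simp: Xker_def)
    show "finite (gam p ` Xker p (Suc k))" using Suc gam_image_Xker by simp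
    fix x c assume x: "x \<in> Xker p (Suc k)" and c: "c \<in> Xker p 1"
    show "dmul x c \<in> Xker p (Suc k)"
      using x c by (auto simp: Xker_def gamk_dmul gam_dmul Xg_dmul funpow_Suc_right simp del: funpow.simps)
  qed
  then show ?case using Suc gam_image_Xker by simp
qed

lemma dpow_dmul: "dpow (dmul x y) n = dmul (dpow x n) (dpow y n)"
  by (simp add: dpow_def dmul_def power_mult_distrib)
lemma dpow_dinv: "dpow (dinv x) n = dinv (dpow x n)"
  by (simp add: dpow_def dinv_def power_inverse)
lemma dpow_done1[simp]: "dpow done1 n = done1"
  by (simp add: dpow_def done1_def)
lemma dinv_done1[simp]: "dinv done1 = done1"
  by (simp add: dinv_def done1_def)
lemma dpow_dpow: "dpow (dpow x a) b = dpow x (a * b)"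
  by (simp add: dpow_def power_mult)
lemma dpow_1[simp]: "dpow x 1 = x"
  by (simp add: dpow_def)

lemma Xker_pow: "0 < p \<Longrightarrow> x \<in> Xker p k \<Longrightarrow> dpow x (p ^ k) = done1"
proof (induction k arbitrary: x)
  case 0
  then show ?case by (simp add: Xker_0)
next
  case (Suc k)
  have xX: "x \<in> Xg p" and gx: "gam p x \<in> Xker p k" using Suc.prems Xker_Suc by auto
  have "dpow (gam p x) (p ^ k) = done1" using Suc.IH[OF Suc.prems(1) gx] .
  then have "gam p (dpow x (p ^ k)) = done1" by (simp add: gam_dpow)
  then have "dpow x (p ^ k) \<in> Xker p 1" using Xg_dpow[OF xX] by (simp add: Xker_1)
  then obtain w where w: "w ^ p = 1" and e: "dpow x (p ^ k) = scal p w"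
    using Xker1_char[OF Suc.prems(1)] by auto
  have "dpow x (p ^ Suc k) = dpow (dpow x (p ^ k)) p" by (simp add: dpow_dpow mult.commute)
  also have "\<dots> = done1" unfolding e using w by (auto simp: dpow_def scal_def done1_def)
  finally show ?case .
qed

lemma Xpp_submod: "0 < p \<Longrightarrow> is_submod p (Xpp p)"
proof -
  assume p: "0 < p"
  have m: "dmul x y \<in> Xpp p" if "x \<in> Xpp p" "y \<in> Xpp p" for x y
  proof -
    obtain a b where a: "dpow x (p ^ a) = done1" and b: "dpow y (p ^ b) = done1"
      and X: "x \<in> Xg p" "y \<in> Xg p" using \<open>x \<in> Xpp p\<close> \<open>y \<in> Xpp p\<close> unfolding Xpp_def by blast
    have "dpow x (p ^ (a + b)) = done1" using a by (simp add: power_add dpow_dpow[symmetric])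
    moreover have "dpow y (p ^ (a + b)) = done1"
    proof -
      have "p ^ (a + b) = p ^ b * p ^ a" by (simp add: power_add)
      then show ?thesis using b by (simp add: dpow_dpow[symmetric])
    qed
    ultimately have "dpow (dmul x y) (p ^ (a + b)) = done1" by (simp add: dpow_dmul)
    then show ?thesis using X by (auto simp: Xpp_def intro: Xg_dmul)
  qed
  have "done1 \<in> Xpp p" unfolding Xpp_def using Xg_done1 by (auto intro!: exI[of _ 0])
  moreover have "dinv x \<in> Xpp p" if "x \<in> Xpp p" for x
    using that unfolding Xpp_def by (auto simp: Xg_dinv dpow_dinv) (metis dinv_done1)
  moreover have "sact p x \<in> Xpp p" if "x \<in> Xpp p" for x
    using that p unfolding Xpp_def by (auto simp: Xg_sact sact_dpow[symmetric]) (metis sact_done1)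
  ultimately show ?thesis unfolding is_submod_def using m by blast
qed

lemma Xker_submod: "0 < p \<Longrightarrow> is_submod p (Xker p k)"
proof -
  assume p: "0 < p"
  have sub: "Xker p k \<subseteq> Xpp p"
    using Xker_pow[OF p] by (auto simp: Xpp_def Xker_def)
  show ?thesis unfolding is_submod_def
    using sub p by (auto simp: Xker_def Xg_done1 Xg_dmul Xg_dinv Xg_sact gamk_dmul gamk_dinv gamk_sact)
qed

lemma funpow_in: "(\<And>x. x \<in> B \<Longrightarrow> f x \<in> B) \<Longrightarrow> x \<in> B \<Longrightarrow> (f ^^ k) x \<in> B"
  by (induction k) auto

lemma funpow_period: "(f ^^ d) x = x \<Longrightarrow> (f ^^ (q * d)) x = x"
proof (induction q)
  case (Suc q)
  have "(f ^^ (Suc q * d)) x = (f ^^ d) ((f ^^ (q * d)) x)" by (simp add: funpow_add)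
  then show ?case using Suc by simp
qed simp

lemma funpow_inj: "(\<And>x. x \<in> B \<Longrightarrow> f x \<in> B) \<Longrightarrow> inj_on f B \<Longrightarrow> inj_on (f ^^ k) B"
proof (induction k)
  case (Suc k)
  have "inj_on (f \<circ> (f ^^ k)) B"
    by (rule comp_inj_on) (use Suc funpow_in[of B f] in \<open>auto intro: inj_on_subset\<close>)
  then show ?case by (simp add: comp_def)
qed simp

lemma prime_period:
  assumes p: "prime (p::nat)" and d: "0 < d" "d < p" and fd: "(f ^^ d) x = x" and fp: "(f ^^ p) x = x"
  shows "f x = x"
proof -
  have g: "gcd d p = 1"
  proof -
    have "gcd d p dvd p" by simp
    then have "gcd d p = 1 \<or> gcd d p = p" using p by (simp add: prime_nat_iff)
    moreover have "gcd d p \<noteq> p"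
    proof
      assume "gcd d p = p"
      then have "p dvd d" by (metis gcd_dvd1)
      then show False using d by (simp add: nat_dvd_not_less)
    qed
    ultimately show ?thesis by blast
  qed
  obtain u v where uv: "d * u = p * v + gcd d p" using bezout_nat[of d p] d by auto
  have "(f ^^ (u * d)) x = x" by (rule funpow_period[OF fd])
  moreover have "(f ^^ (u * d)) x = f ((f ^^ (v * p)) x)"
    using uv g by (simp add: mult.commute)
  moreover have "(f ^^ (v * p)) x = x" by (rule funpow_period[OF fp])
  ultimately show ?thesis by simp
qed

lemma orbit_dvd:
  assumes p: "prime (p::nat)"
  shows "finite B \<Longrightarrow> (\<And>x. x \<in> B \<Longrightarrow> f x \<in> B) \<Longrightarrow> inj_on f B \<Longrightarrow> (\<And>x. x \<in> B \<Longrightarrow> f x \<noteq> x)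
     \<Longrightarrow> (\<And>x. x \<in> B \<Longrightarrow> (f ^^ p) x = x) \<Longrightarrow> p dvd card B"
proof (induction "card B" arbitrary: B rule: less_induct)
  case less
  show ?case
  proof (cases "B = {}")
    case True
    then show ?thesis by simp
  next
    case False
    then obtain x where x: "x \<in> B" by auto
    define Ob where "Ob = (\<lambda>k. (f ^^ k) x) ` {..<p}"
    have ObB: "Ob \<subseteq> B" using funpow_in[of B f] less.prems x by (auto simp: Ob_def)
    have ne: "(f ^^ a) x \<noteq> (f ^^ b) x" if ab: "a < b" "b < p" for a b
    proof
      assume eq: "(f ^^ a) x = (f ^^ b) x"
      have "(f ^^ b) x = (f ^^ a) ((f ^^ (b - a)) x)"
      proof -
        have "b = a + (b - a)" using ab by simp
        then have "(f ^^ b) x = (f ^^ (a + (b - a))) x" by simp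
        then show ?thesis by (simp add: funpow_add)
      qed
      then have "(f ^^ a) ((f ^^ (b - a)) x) = (f ^^ a) x" using eq by simp
      moreover have "inj_on (f ^^ a) B" using funpow_inj less.prems by blast
      moreover have "(f ^^ (b - a)) x \<in> B" using funpow_in[of B f] less.prems x by blast
      ultimately have "(f ^^ (b - a)) x = x" using x by (auto simp: inj_on_def)
      moreover have "0 < b - a" "b - a < p" using ab by auto
      ultimately have "f x = x" using prime_period[OF p, of "b - a" f x] less.prems(5) x by blast
      then show False using less.prems x by blast
    qed
    have inj: "inj_on (\<lambda>k. (f ^^ k) x) {..<p}"
      unfolding inj_on_def by (metis lessThan_iff linorder_neqE_nat ne)
    have cO: "card Ob = p" unfolding Ob_def using inj by (simp add: card_image)
    define B' where "B' = B - Ob"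
    have xO: "x \<in> Ob" unfolding Ob_def using prime_gt_0_nat[OF p] by (auto intro: image_eqI[of _ _ 0])
    have lt: "card B' < card B" unfolding B'_def
      using less.prems(1) ObB xO by (intro psubset_card_mono) auto
    have map': "f y \<in> B'" if y: "y \<in> B'" for y
    proof -
      have yB: "y \<in> B" and yO: "y \<notin> Ob" using y by (auto simp: B'_def)
      have "f y \<notin> Ob"
      proof
        assume "f y \<in> Ob"
        then obtain k where k: "k < p" and fy: "f y = (f ^^ k) x" by (auto simp: Ob_def)
        show False
        proof (cases k)
          case 0
          obtain q where q: "p = Suc q" using prime_gt_0_nat[OF p] by (cases p) auto
          have "f y = (f ^^ p) x" using fy 0 less.prems x by simp
          also have "\<dots> = f ((f ^^ q) x)" by (simp add: q)
          finally have "y = (f ^^ q) x"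
            using less.prems(3) yB funpow_in[of B f] less.prems(2) x by (auto simp: inj_on_def)
          then show False using yO q by (auto simp: Ob_def)
        next
          case (Suc k')
          have "f y = f ((f ^^ k') x)" using fy Suc by simp
          then have "y = (f ^^ k') x"
            using less.prems(3) yB funpow_in[of B f] less.prems(2) x by (auto simp: inj_on_def)
          then show False using yO Suc k by (auto simp: Ob_def)
        qed
      qed
      then show ?thesis using less.prems(2) yB by (simp add: B'_def)
    qed
    have "p dvd card B'"
      by (rule less.hyps[OF lt]) (use less.prems map' in \<open>auto simp: B'_def intro: inj_on_subset\<close>)
    moreover have "card B = card B' + card Ob"
    proof -
      have "finite Ob" using ObB less.prems(1) finite_subset by blast
      then have "card (B - Ob) = card B - card Ob" using ObB by (rule card_Diff_subset)
      moreover have "card Ob \<le> card B" using ObB less.prems(1) by (rule card_mono[rotated])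
      ultimately show ?thesis unfolding B'_def by simp
    qed
    ultimately show ?thesis using cO by simp
  qed
qed

lemma submod_Xg: "is_submod p H \<Longrightarrow> H \<subseteq> Xg p"
  by (auto simp: is_submod_def Xpp_def)

lemma sact_inj: "0 < p \<Longrightarrow> H \<subseteq> Dg p \<Longrightarrow> inj_on (sact p) H"
proof (rule inj_onI)
  fix x y assume p: "0 < p" and H: "H \<subseteq> Dg p" and x: "x \<in> H" and y: "y \<in> H" and e: "sact p x = sact p y"
  obtain q where q: "p = Suc q" using p by (cases p) auto
  have "x = (sact p ^^ p) x" using sact_pow_p p x H by auto
  also have "\<dots> = (sact p ^^ q) (sact p x)" by (simp add: q funpow_Suc_right del: funpow.simps)
  also have "\<dots> = (sact p ^^ q) (sact p y)" using e by simp
  also have "\<dots> = (sact p ^^ p) y" by (simp add: q funpow_Suc_right del: funpow.simps)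
  also have "\<dots> = y" using sact_pow_p p y H by auto
  finally show "x = y" .
qed

lemma gam_image_submod:
  assumes p: "0 < p" and H: "is_submod p H"
  shows "is_submod p (gam p ` H)"
proof -
  have X: "is_submod p (Xpp p)" by (rule Xpp_submod[OF p])
  have "gam p x \<in> Xpp p" if "x \<in> H" for x
    using that H X unfolding is_submod_def gam_def by blast
  moreover have "done1 \<in> gam p ` H" using H unfolding is_submod_def by (metis gam_done1 image_eqI)
  moreover have "dmul a b \<in> gam p ` H" if "a \<in> gam p ` H" "b \<in> gam p ` H" for a b
    using that H unfolding is_submod_def by (auto simp: gam_dmul[symmetric])
  moreover have "dinv a \<in> gam p ` H" if "a \<in> gam p ` H" for a
    using that H unfolding is_submod_def by (auto simp: gam_dinv[symmetric])
  moreover have "sact p a \<in> gam p ` H" if "a \<in> gam p ` H" for a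
    using that H unfolding is_submod_def by (auto simp: gam_sact[symmetric])
  ultimately show ?thesis unfolding is_submod_def by blast
qed

lemma submod_card:
  assumes p: "prime p"
  shows "is_submod p H \<Longrightarrow> finite H \<Longrightarrow> card H = p ^ j \<Longrightarrow> H = Xker p j"
proof (induction j arbitrary: H)
  case 0
  have "done1 \<in> H" using 0 by (simp add: is_submod_def)
  then have "H = {done1}" using 0 by (metis card_1_singletonE power_0 singletonD)
  then show ?case by (simp add: Xker_0)
next
  case (Suc j)
  have p0: "0 < p" using p prime_gt_0_nat by blast
  have HX: "H \<subseteq> Xg p" using submod_Xg Suc.prems(1) by blast
  have HD: "H \<subseteq> Dg p" using HX Xg_Dg by blast
  have sH: "sact p x \<in> H" if "x \<in> H" for x using Suc.prems(1) that by (simp add: is_submod_def)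
  have injH: "inj_on (sact p) H" by (rule sact_inj[OF p0 HD])
  define Fix where "Fix = {x \<in> H. sact p x = x}"
  define B where "B = H - Fix"
  have "p dvd card B"
  proof (rule orbit_dvd[OF p])
    show "finite B" using Suc.prems(2) by (simp add: B_def)
    show "inj_on (sact p) B" using injH by (rule inj_on_subset) (auto simp: B_def)
    fix x assume x: "x \<in> B"
    then have xH: "x \<in> H" and nx: "sact p x \<noteq> x" by (auto simp: B_def Fix_def)
    show "sact p x \<noteq> x" by fact
    have "sact p (sact p x) \<noteq> sact p x"
      using injH xH sH[OF xH] nx by (auto simp: inj_on_def)
    then show "sact p x \<in> B" using sH[OF xH] by (simp add: B_def Fix_def)
    show "(sact p ^^ p) x = x" using sact_pow_p[OF p0] xH HD by auto
  qed
  moreover have "card H = card Fix + card B"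
    unfolding B_def using Suc.prems(2) card_Diff_subset[of Fix H] card_mono[of H Fix]
    by (simp add: Fix_def)
  moreover have "p dvd card H" using Suc.prems(3) by simp
  ultimately have "p dvd card Fix" by (metis dvd_add_left_iff)
  moreover have "done1 \<in> Fix" using Suc.prems(1) by (simp add: Fix_def is_submod_def)
  moreover have finF: "finite Fix" using Suc.prems(2) by (simp add: Fix_def)
  ultimately have "card Fix \<noteq> 0" "p dvd card Fix" by auto
  then have cF: "p \<le> card Fix" by (simp add: dvd_imp_le)
  have FK: "Fix \<subseteq> Xker p 1"
    using HX HD by (auto simp: Fix_def Xker_1 gam_one_iff)
  have "Fix = Xker p 1"
    using card_Xker1[OF p0] FK cF by (metis card_mono card_seteq le_antisym)
  then have K1: "Xker p 1 \<subseteq> H" by (auto simp: Fix_def)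
  have "finite H \<and> card H = p * card (gam p ` H)"
  proof (rule fiber[OF p0 HX])
    show "finite (gam p ` H)" using Suc.prems(2) by simp
    fix x c assume "x \<in> H" "c \<in> Xker p 1"
    then show "dmul x c \<in> H" using K1 Suc.prems(1) by (auto simp: is_submod_def)
  qed
  then have "card (gam p ` H) = p ^ j" using Suc.prems(3) p0 by simp
  then have gH: "gam p ` H = Xker p j"
    using Suc.IH gam_image_submod[OF p0 Suc.prems(1)] Suc.prems(2) by simp
  have "H \<subseteq> Xker p (Suc j)" using gH HX Xker_Suc[OF p0] by auto
  then show ?case
    using card_Xker[OF p0, of "Suc j"] Suc.prems(3) by (simp add: card_subset_eq)
qed

definition zeta :: "nat \<Rightarrow> complex" where
  "zeta M = bm 2 M 0"

lemma zeta_exp: "zeta M = exp (complex_of_real (2 * pi) * \<i> / of_nat M)" by (simp add: zeta_def bm_def)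

lemma zeta_power: "zeta M ^ a = exp (of_nat a * (complex_of_real (2 * pi) * \<i> / of_nat M))"
  by (simp only: zeta_exp exp_of_nat_mult)

lemma bm_eq: "bm p M = (\<lambda>i. if i = 0 then zeta M else if i = 1 then inverse (zeta M) else 1)"
proof -
  have z: "zeta M = exp (complex_of_real (2 * pi) * \<i> / of_nat M)" by (simp add: zeta_def bm_def)
  have "exp (complex_of_real (- 2 * pi) * \<i> / of_nat M) = exp (- (complex_of_real (2 * pi) * \<i> / of_nat M))"
    by simp
  also have "\<dots> = inverse (zeta M)" by (simp add: z exp_minus)
  finally have e: "exp (complex_of_real (- 2 * pi) * \<i> / of_nat M) = inverse (zeta M)" .
  show ?thesis unfolding bm_def e z[symmetric] ..
qed

lemma zeta_pow: "0 < M \<Longrightarrow> zeta M ^ M = 1"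
proof -
  assume M: "0 < M"
  have "zeta M ^ M = exp (of_nat M * (complex_of_real (2 * pi) * \<i> / of_nat M))"
    by (rule zeta_power)
  also have "\<dots> = exp (2 * pi * \<i>)" using M by simp
  finally show ?thesis by simp
qed

lemma zeta_nz: "zeta M \<noteq> 0" by (simp add: zeta_def bm_def)

lemma root_is_zeta_pow: "0 < M \<Longrightarrow> w ^ M = 1 \<Longrightarrow> \<exists>a. w = zeta M ^ a"
proof -
  assume M: "0 < M" and w: "w ^ M = 1"
  then have "w \<in> {z::complex. z ^ M = 1}" by simp
  then obtain a where a: "w = exp (2 * of_real pi * \<i> * of_nat a / of_nat M)"
    using complex_roots_unity[of M] M by auto
  have "zeta M ^ a = exp (of_nat a * (complex_of_real (2 * pi) * \<i> / of_nat M))"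
    by (rule zeta_power)
  also have "\<dots> = w" using a by (simp add: field_simps)
  finally show ?thesis by metis
qed

lemma sact_pow_mod:
  assumes "Suc m < p" "i < p"
  shows "(i + m * (p - 1)) mod p = (if m \<le> i then i - m else i + p - m)"
proof (cases "m \<le> i")
  case True
  have e: "i + m * (p - 1) = (i - m) + m * p" using True assms by (simp add: algebra_simps diff_mult_distrib2)
  have "((i - m) + m * p) mod p = i - m" using assms by simp
  then show ?thesis using True by (simp only: e) simp
next
  case False
  have "i + m * (p - 1) = (i + p - m) + (m - 1) * p" using False assms
    by (simp add: algebra_simps diff_mult_distrib2 diff_mult_distrib)
  moreover have "i + p - m < p" using False assms by arith
  then have "((i + p - m) + (m - 1) * p) mod p = i + p - m" by simp
  ultimately show ?thesis using False by simp
qed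

lemma bm_Dg: "1 < p \<Longrightarrow> bm p M \<in> Dg p"
  by (auto simp: Dg_def bm_eq zeta_nz)

lemma emb:
  assumes p: "1 < p" and m: "Suc m < p"
  shows "(sact p ^^ m) (bm p M) = (\<lambda>i. if i = m then zeta M else if i = Suc m then inverse (zeta M) else 1)"
proof
  fix i
  have p0: "0 < p" using p by simp
  show "(sact p ^^ m) (bm p M) i = (if i = m then zeta M else if i = Suc m then inverse (zeta M) else 1)"
  proof (cases "i < p")
    case True
    have "(sact p ^^ m) (bm p M) i = bm p M ((i + m * (p - 1)) mod p)"
      using sact_pow[OF p0 bm_Dg[OF p]] True by simp
    also have "\<dots> = (if i = m then zeta M else if i = Suc m then inverse (zeta M) else 1)"
      using sact_pow_mod[OF m True] m True by (auto simp: bm_eq)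
    finally show ?thesis .
  next
    case False
    then show ?thesis using sact_pow[OF p0 bm_Dg[OF p]] m by auto
  qed
qed



definition Xn :: "nat \<Rightarrow> nat \<Rightarrow> (nat \<Rightarrow> complex) set" where
  "Xn p M = {x \<in> Xg p. dpow x M = done1}"

lemma Xn_dmul: "x \<in> Xn p M \<Longrightarrow> y \<in> Xn p M \<Longrightarrow> dmul x y \<in> Xn p M"
  by (auto simp: Xn_def Xg_dmul dpow_dmul)
lemma Xn_dinv: "x \<in> Xn p M \<Longrightarrow> dinv x \<in> Xn p M"
  by (auto simp: Xn_def Xg_dinv dpow_dinv)
lemma Xn_dpow: "x \<in> Xn p M \<Longrightarrow> dpow x a \<in> Xn p M"
  by (auto simp: Xn_def Xg_dpow dpow_dpow) (metis dpow_done1 dpow_dpow mult.commute)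
lemma Xn_sact: "0 < p \<Longrightarrow> x \<in> Xn p M \<Longrightarrow> sact p x \<in> Xn p M"
  by (auto simp: Xn_def Xg_sact sact_dpow[symmetric])
lemma Xn_done1: "done1 \<in> Xn p M"
  by (auto simp: Xn_def Xg_done1)

lemma Xn_submod: "0 < p \<Longrightarrow> is_submod p (Xn p (p ^ n))"
proof -
  assume p: "0 < p"
  have "Xn p (p ^ n) \<subseteq> Xpp p" unfolding Xn_def Xpp_def by blast
  then show ?thesis unfolding is_submod_def using Xn_dmul Xn_dinv Xn_sact[OF p] Xn_done1 by blast
qed

lemma bm_Xn: "1 < p \<Longrightarrow> 0 < M \<Longrightarrow> bm p M \<in> Xn p M"
proof -
  assume p: "1 < p" and M: "0 < M"
  define r where "r = p - 2"
  have r: "p = Suc (Suc r)" using p by (simp add: r_def)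
  have "(\<Prod>i<p. bm p M i) = bm p M 0 * (bm p M 1 * (\<Prod>i<r. bm p M (Suc (Suc i))))"
    unfolding r prod.lessThan_Suc_shift by simp
  also have "\<dots> = 1" by (simp add: bm_eq zeta_nz)
  finally have "bm p M \<in> Xg p" using bm_Dg[OF p] by (simp add: Xg_def)
  moreover have "dpow (bm p M) M = done1"
    using zeta_pow[OF M] by (auto simp: dpow_def bm_eq done1_def power_inverse)
  ultimately show ?thesis by (simp add: Xn_def)
qed

lemma Xn_sub_H:
  assumes p: "1 < p" and M: "0 < M" and H: "is_submod p H" and b: "bm p M \<in> H"
  shows "Xn p M \<subseteq> H"
proof -
  have p0: "0 < p" using p by simp
  obtain q where q: "p = Suc q" using p0 by (cases p) auto
  have Hm: "dmul x y \<in> H" "dinv x \<in> H" "sact p x \<in> H" if "x \<in> H" "y \<in> H" for x y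
    using H that by (auto simp: is_submod_def)
  have Hpow: "dpow x a \<in> H" if "x \<in> H" for x a
  proof (induction a)
    case 0
    then show ?case using H by (simp add: is_submod_def dpow_def done1_def[symmetric])
  next
    case (Suc a)
    have "dpow x (Suc a) = dmul x (dpow x a)" by (simp add: dpow_def dmul_def)
    then show ?case using Hm(1)[OF that Suc] by simp
  qed
  have claim: "x \<in> Xn p M \<Longrightarrow> (\<forall>i>m. x i = 1) \<Longrightarrow> x \<in> H" for m x
  proof (induction m arbitrary: x)
    case 0
    have xX: "x \<in> Xg p" using 0 by (simp add: Xn_def)
    have "(\<Prod>i<p. x i) = x 0 * (\<Prod>i<q. x (Suc i))" unfolding q by (rule prod.lessThan_Suc_shift)
    also have "(\<Prod>i<q. x (Suc i)) = 1" using 0 by simp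
    finally have "x 0 = 1" using xX by (simp add: Xg_def)
    then have "x = done1" using 0 by (auto simp: done1_def fun_eq_iff) (metis gr0I)
    then show ?case using H by (simp add: is_submod_def)
  next
    case (Suc m)
    have xX: "x \<in> Xg p" and xM: "dpow x M = done1" using Suc.prems by (auto simp: Xn_def)
    show ?case
    proof (cases "Suc m < p")
      case False
      have "\<forall>i>m. x i = 1" using xX False by (auto simp: Xg_def Dg_def)
      then show ?thesis using Suc.IH Suc.prems by blast
    next
      case True
      define w where "w = x (Suc m)"
      have "w ^ M = 1" using xM unfolding w_def dpow_def done1_def by metis
      then obtain a where a: "w = zeta M ^ a" using root_is_zeta_pow M by blast
      define e where "e = (sact p ^^ m) (bm p M)"
      have eH: "e \<in> H" unfolding e_def by (rule funpow_in[of H]) (use Hm b in auto)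
      have eX: "e \<in> Xn p M" unfolding e_def
        by (rule funpow_in[of "Xn p M"]) (use Xn_sact[OF p0] bm_Xn[OF p M] in auto)
      have ee: "e = (\<lambda>i. if i = m then zeta M else if i = Suc m then inverse (zeta M) else 1)"
        unfolding e_def by (rule emb[OF p True])
      define y where "y = dmul x (dpow e a)"
      have yX: "y \<in> Xn p M" unfolding y_def by (intro Xn_dmul Xn_dpow Suc.prems eX)
      have "\<forall>i>m. y i = 1"
      proof (intro allI impI)
        fix i assume i: "m < i"
        show "y i = 1"
        proof (cases "i = Suc m")
          case True
          then show ?thesis using a zeta_nz
            by (simp add: y_def dmul_def dpow_def ee w_def[symmetric] power_inverse)
        next
          case False
          then show ?thesis using Suc.prems(2) i by (simp add: y_def dmul_def dpow_def ee)
        qed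
      qed
      then have yH: "y \<in> H" using Suc.IH yX by blast
      have "x = dmul y (dinv (dpow e a))"
        using zeta_nz by (auto simp: y_def dmul_def dinv_def dpow_def ee fun_eq_iff)
      then show ?thesis using Hm yH Hpow eH by metis
    qed
  qed
  show ?thesis
  proof
    fix x assume x: "x \<in> Xn p M"
    then have "\<forall>i>p. x i = 1" by (auto simp: Xn_def Xg_def Dg_def)
    then show "x \<in> H" using claim x by blast
  qed
qed

lemma root_nz: "0 < M \<Longrightarrow> (z::complex) ^ M = 1 \<Longrightarrow> z \<noteq> 0"
  by (metis power_0_left not_gr0 zero_neq_one)

lemma card_Xn:
  assumes p: "0 < p" and M: "0 < M"
  shows "finite (Xn p M) \<and> card (Xn p M) = M ^ (p - 1)"
proof -
  define q where "q = p - 1"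
  have q: "p = Suc q" using p by (simp add: q_def)
  define U where "U = {z::complex. z ^ M = 1}"
  define A where "A = PiE {..<q} (\<lambda>_. U)"
  define phi where "phi x = restrict (\<lambda>t. x (Suc t)) {..<q}" for x :: "nat \<Rightarrow> complex"
  define psi where "psi g = (\<lambda>i::nat. if i = 0 then inverse (\<Prod>t<q. g t) else if i < p then g (i - 1) else (1::complex))" for g
  have pr: "(\<Prod>i<p. x i) = x 0 * (\<Prod>t<q. x (Suc t))" for x :: "nat \<Rightarrow> complex"
    unfolding q by (rule prod.lessThan_Suc_shift)
  have xpow: "x i ^ M = 1" if "x \<in> Xn p M" for x i
    using that unfolding Xn_def dpow_def done1_def by (metis (mono_tags, lifting) mem_Collect_eq)
  have "bij_betw phi (Xn p M) A"
  proof (rule bij_betw_byWitness[where f'=psi])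
    show "\<forall>x\<in>Xn p M. psi (phi x) = x"
    proof
      fix x assume x: "x \<in> Xn p M"
      have xX: "x \<in> Xg p" using x by (simp add: Xn_def)
      have "x 0 * (\<Prod>t<q. x (Suc t)) = 1" using xX pr[of x] by (simp add: Xg_def)
      then have x0: "inverse (\<Prod>t<q. x (Suc t)) = x 0" by (metis inverse_unique mult.commute)
      show "psi (phi x) = x"
      proof
        fix i show "psi (phi x) i = x i"
          using x0 xX q by (cases "i = 0") (auto simp: psi_def phi_def Xg_def Dg_def)
      qed
    qed
    show "\<forall>g\<in>A. phi (psi g) = g"
    proof
      fix g assume g: "g \<in> A"
      have "phi (psi g) = restrict g {..<q}"
        unfolding phi_def psi_def using q by (auto simp: restrict_def fun_eq_iff)
      also have "\<dots> = g" using g unfolding A_def by (rule PiE_restrict)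
      finally show "phi (psi g) = g" .
    qed
    show "phi ` Xn p M \<subseteq> A"
    proof
      fix y assume "y \<in> phi ` Xn p M"
      then obtain x where x: "x \<in> Xn p M" and y: "y = phi x" by blast
      have "\<forall>t\<in>{..<q}. x (Suc t) \<in> U" using xpow[OF x] by (simp add: U_def)
      then show "y \<in> A" unfolding y phi_def A_def by (subst restrict_PiE_iff) blast
    qed
    show "psi ` A \<subseteq> Xn p M"
    proof
      fix x assume "x \<in> psi ` A"
      then obtain g where g: "g \<in> A" and xg: "x = psi g" by auto
      have gU: "t < q \<Longrightarrow> g t ^ M = 1" for t using g by (auto simp: A_def U_def)
      have gnz: "t < q \<Longrightarrow> g t \<noteq> 0" for t using gU root_nz[OF M] by blast
      have P0: "(\<Prod>t<q. g t) \<noteq> 0" using gnz by simp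
      have xD: "x \<in> Dg p" using gnz P0 q by (auto simp: Dg_def xg psi_def)
      have "(\<Prod>t<q. x (Suc t)) = (\<Prod>t<q. g t)" by (rule prod.cong) (auto simp: xg psi_def q)
      then have "(\<Prod>i<p. x i) = 1" using pr[of x] P0 by (simp add: xg psi_def)
      moreover have "dpow x M = done1"
      proof
        fix i
        have "(\<Prod>t<q. g t) ^ M = (\<Prod>t<q. g t ^ M)" by (rule prod_power_distrib)
        also have "\<dots> = 1" using gU by simp
        finally have "(\<Prod>t<q. g t) ^ M = 1" .
        then show "dpow x M i = done1 i"
          using gU q by (auto simp: dpow_def done1_def xg psi_def power_inverse)
      qed
      ultimately show "x \<in> Xn p M" using xD by (simp add: Xn_def Xg_def)
    qed
  qed
  moreover have "finite A" "card A = M ^ q"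
    using M by (auto simp: A_def U_def card_PiE finite_roots_unity card_complex_roots_unity intro!: finite_PiE)
  ultimately show ?thesis using q by (metis bij_betw_finite bij_betw_same_card diff_Suc_1)
qed

lemma gen_sub: "is_submod p H \<Longrightarrow> x \<in> H \<Longrightarrow> gen_submod p x \<subseteq> H"
  unfolding gen_submod_def by blast

lemma gen_submod_is:
  assumes p: "0 < p" and x: "x \<in> Xpp p"
  shows "is_submod p (gen_submod p x)"
proof -
  have X: "is_submod p (Xpp p)" by (rule Xpp_submod[OF p])
  have sub: "gen_submod p x \<subseteq> Xpp p" by (rule gen_sub[OF X x])
  show ?thesis unfolding is_submod_def
  proof (intro conjI ballI)
    show "gen_submod p x \<subseteq> Xpp p" by (rule sub)
    show "done1 \<in> gen_submod p x" unfolding gen_submod_def is_submod_def by blast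
    fix a assume a: "a \<in> gen_submod p x"
    show "dinv a \<in> gen_submod p x" using a unfolding gen_submod_def is_submod_def by blast
    show "sact p a \<in> gen_submod p x" using a unfolding gen_submod_def is_submod_def by blast
    fix b assume b: "b \<in> gen_submod p x"
    show "dmul a b \<in> gen_submod p x" using a b unfolding gen_submod_def is_submod_def by blast
  qed
qed

lemma Xpp_gam: "0 < p \<Longrightarrow> x \<in> Xpp p \<Longrightarrow> gam p x \<in> Xpp p"
  using Xpp_submod unfolding is_submod_def gam_def by blast

lemma Xpp_gamk: "0 < p \<Longrightarrow> x \<in> Xpp p \<Longrightarrow> (gam p ^^ k) x \<in> Xpp p"
  by (induction k) (auto simp: Xpp_gam)

lemma gen_gam:
  assumes p: "0 < p" and x: "x \<in> Xpp p"
  shows "gam p ` gen_submod p x \<subseteq> gen_submod p (gam p x)"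
proof -
  define G where "G = gen_submod p (gam p x)"
  have G: "is_submod p G" unfolding G_def by (rule gen_submod_is[OF p Xpp_gam[OF p x]])
  define S where "S = {y \<in> Xpp p. gam p y \<in> G}"
  have X: "is_submod p (Xpp p)" by (rule Xpp_submod[OF p])
  have "is_submod p S"
    unfolding is_submod_def S_def
    using G X unfolding is_submod_def by (auto simp: gam_dmul gam_dinv gam_sact)
  moreover have "x \<in> S"
    unfolding S_def G_def using x gen_submod_is[OF p Xpp_gam[OF p x]]
    unfolding gen_submod_def by blast
  ultimately have "gen_submod p x \<subseteq> S" by (rule gen_sub)
  then show ?thesis unfolding S_def G_def by auto
qed

lemma gen_gamk:
  assumes p: "0 < p" and x: "x \<in> Xpp p"
  shows "(gam p ^^ k) ` gen_submod p x \<subseteq> gen_submod p ((gam p ^^ k) x)"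
proof (induction k)
  case 0
  then show ?case by simp
next
  case (Suc k)
  have "(gam p ^^ Suc k) ` gen_submod p x = gam p ` ((gam p ^^ k) ` gen_submod p x)"
    by (simp add: image_comp)
  also have "\<dots> \<subseteq> gam p ` gen_submod p ((gam p ^^ k) x)" using Suc by blast
  also have "\<dots> \<subseteq> gen_submod p (gam p ((gam p ^^ k) x))"
    by (rule gen_gam[OF p Xpp_gamk[OF p x]])
  finally show ?case by simp
qed

lemma gamk_image_Xker: "0 < p \<Longrightarrow> (gam p ^^ m) ` Xker p (j + m) = Xker p j"
proof (induction m)
  case 0
  then show ?case by simp
next
  case (Suc m)
  have "(gam p ^^ Suc m) ` Xker p (j + Suc m) = (gam p ^^ m) ` (gam p ` Xker p (Suc (j + m)))"
    by (simp add: funpow_Suc_right image_comp del: funpow.simps)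
  also have "\<dots> = Xker p j" using Suc gam_image_Xker by simp
  finally show ?case .
qed

theorem lemma3p7:
  fixes p :: nat
  assumes "prime p"
  shows "\<forall>j::nat.
           (\<forall>H. (is_submod p H \<and> finite H \<and> card H = p ^ j) \<longleftrightarrow> H = Xker p j)
           \<and> (j \<ge> 1 \<longrightarrow> Xker p j = gen_submod p (xgen p j))"
proof (rule allI, rule conjI)
  have p1: "1 < p" using assms prime_gt_1_nat by blast
  then have p0: "0 < p" by simp
  fix j :: nat
  show "\<forall>H. (is_submod p H \<and> finite H \<and> card H = p ^ j) \<longleftrightarrow> H = Xker p j"
    using submod_card[OF assms] Xker_submod[OF p0] card_Xker[OF p0] by blast
  show "j \<ge> 1 \<longrightarrow> Xker p j = gen_submod p (xgen p j)"
  proof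
  assume j: "1 \<le> j"
  define n where "n = (j + p - 2) div (p - 1)"
  define m where "m = n * (p - 1) - j"
  have xg: "xgen p j = (gam p ^^ m) (bm p (p ^ n))"
    unfolding xgen_def Let_def n_def m_def by simp
  have Nj: "j \<le> n * (p - 1)"
  proof -
    define d where "d = p - 1"
    have d: "1 \<le> d" using p1 by (simp add: d_def)
    have e: "j + p - 2 = j + d - 1" using p1 by (simp add: d_def)
    have "(j + d - 1) div d * d + (j + d - 1) mod d = j + d - 1" by simp
    moreover have "(j + d - 1) mod d < d" using d by simp
    ultimately have "j \<le> (j + d - 1) div d * d" by linarith
    then show ?thesis unfolding n_def e d_def[symmetric] .
  qed
  have n1: "0 < n"
  proof (rule ccontr)
    assume "\<not> 0 < n" then have "n = 0" by simp
    then show False using Nj j by simp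
  qed
  define N where "N = n * (p - 1)"
  have jm: "j + m = N" using Nj by (simp add: m_def N_def)
  define b where "b = bm p (p ^ n)"
  have M0: "0 < p ^ n" using p0 by simp
  have XnS: "is_submod p (Xn p (p ^ n))" by (rule Xn_submod[OF p0])
  have bX: "b \<in> Xn p (p ^ n)" unfolding b_def by (rule bm_Xn[OF p1 M0])
  have gb: "gen_submod p b = Xn p (p ^ n)"
  proof
    show "gen_submod p b \<subseteq> Xn p (p ^ n)" by (rule gen_sub[OF XnS bX])
    show "Xn p (p ^ n) \<subseteq> gen_submod p b"
      unfolding gen_submod_def b_def using Xn_sub_H[OF p1 M0] by blast
  qed
  have "card (Xn p (p ^ n)) = p ^ N"
    using card_Xn[OF p0 M0] by (simp add: N_def power_mult)
  then have XnK: "Xn p (p ^ n) = Xker p N"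
    using submod_card[OF assms XnS] card_Xn[OF p0 M0] by blast
  have "Xker p j = (gam p ^^ m) ` Xker p N"
    using gamk_image_Xker[OF p0, of m j] jm by simp
  also have "\<dots> = (gam p ^^ m) ` gen_submod p b" using gb XnK by simp
  also have "\<dots> \<subseteq> gen_submod p (xgen p j)"
    unfolding xg b_def[symmetric]
    by (rule gen_gamk[OF p0]) (use bX in \<open>auto simp: Xn_def Xpp_def\<close>)
  finally have sub1: "Xker p j \<subseteq> gen_submod p (xgen p j)" .
  have "xgen p j \<in> Xker p j"
    unfolding xg b_def[symmetric]
    using bX XnK gamk_image_Xker[OF p0, of m j] jm by blast
  then have "gen_submod p (xgen p j) \<subseteq> Xker p j"
    by (rule gen_sub[OF Xker_submod[OF p0]])
  then show "Xker p j = gen_submod p (xgen p j)" using sub1 by blast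
  qed
qed

end
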